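(* Let $m\geq 2$ and $n\geq 2$ be integers, let $G_m$ be a graph of order $m$ and $K_n$ the complete graph of order $n$. Then $rvcl(G_m\diamond K_n)\geq n+1$.
   Context: All graphs are finite, simple, connected and undirected; $d$ denotes graph distance. A rainbow vertex $k$-coloring of $G$ is a map $c:V(G)\to\{1,\dots,k\}$ such that every two vertices are joined by a path whose internal vertices all receive distinct colors. For such $c$ let $R_i=c^{-1}(i)$; the rainbow code of $v$ is $(d(v,R_1),\dots,d(v,R_k))$ with $d(v,R_i)=\min_{x\in R_i}d(v,x)$. A locating rainbow $k$-coloring is a rainbow vertex $k$-coloring in which distinct vertices have distinct rainbow codes; $rvcl(G)$ is the least $k$ for which one exists. For graphs $G_m$ (order $m$) and $H_n$ (order $n$) on disjoint vertex sets, the edge corona $G_m\diamond H_n$ is obtained from one copy of $G_m$ and $|E(G_m)|$ vertex-disjoint copies of $H_n$, one per edge of $G_m$, by joining both end vertices of the $j$-th edge of $G_m$ to every vertex of the $j$-th copy of $H_n$. *)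

theory Defs
  imports Main
begin

type_synonym 'a graph = "'a set \<times> 'a set set"

definition verts :: "'a graph \<Rightarrow> 'a set" where "verts G = fst G"
definition edges :: "'a graph \<Rightarrow> 'a set set" where "edges G = snd G"

definition simple_graph :: "'a graph \<Rightarrow> bool" where
  "simple_graph G \<longleftrightarrow> finite (verts G) \<and>
     edges G \<subseteq> {{u, v} | u v. u \<in> verts G \<and> v \<in> verts G \<and> u \<noteq> v}"

definition is_walk :: "'a graph \<Rightarrow> 'a list \<Rightarrow> bool" where
  "is_walk G xs \<longleftrightarrow> xs \<noteq> [] \<and> set xs \<subseteq> verts G \<and>
     (\<forall>i < length xs - 1. {xs ! i, xs ! (i + 1)} \<in> edges G)"

definition is_path :: "'a graph \<Rightarrow> 'a list \<Rightarrow> bool" where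
  "is_path G xs \<longleftrightarrow> is_walk G xs \<and> distinct xs"

definition connected_graph :: "'a graph \<Rightarrow> bool" where
  "connected_graph G \<longleftrightarrow> simple_graph G \<and> verts G \<noteq> {} \<and>
     (\<forall>u \<in> verts G. \<forall>v \<in> verts G. \<exists>xs. is_path G xs \<and> hd xs = u \<and> last xs = v)"

definition gdist :: "'a graph \<Rightarrow> 'a \<Rightarrow> 'a \<Rightarrow> nat" where
  "gdist G u v = (LEAST n. \<exists>xs. is_walk G xs \<and> hd xs = u \<and> last xs = v \<and> length xs = n + 1)"

definition set_dist :: "'a graph \<Rightarrow> 'a \<Rightarrow> 'a set \<Rightarrow> nat" where
  "set_dist G v S = (LEAST n. \<exists>x \<in> S. gdist G v x = n)"

definition rainbow_vertex_coloring :: "'a graph \<Rightarrow> nat \<Rightarrow> ('a \<Rightarrow> nat) \<Rightarrow> bool" where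
  "rainbow_vertex_coloring G k c \<longleftrightarrow> c ` verts G \<subseteq> {1..k} \<and>
     (\<forall>u \<in> verts G. \<forall>v \<in> verts G. \<exists>xs. is_path G xs \<and> hd xs = u \<and> last xs = v \<and>
        distinct (map c (butlast (tl xs))))"

definition color_class :: "'a graph \<Rightarrow> ('a \<Rightarrow> nat) \<Rightarrow> nat \<Rightarrow> 'a set" where
  "color_class G c i = {x \<in> verts G. c x = i}"

definition rainbow_code :: "'a graph \<Rightarrow> ('a \<Rightarrow> nat) \<Rightarrow> nat \<Rightarrow> 'a \<Rightarrow> nat list" where
  "rainbow_code G c k v = map (\<lambda>i. set_dist G v (color_class G c i)) [1..<k + 1]"

definition locating_rainbow_coloring :: "'a graph \<Rightarrow> nat \<Rightarrow> ('a \<Rightarrow> nat) \<Rightarrow> bool" where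
  "locating_rainbow_coloring G k c \<longleftrightarrow> rainbow_vertex_coloring G k c \<and>
     c ` verts G = {1..k} \<and> inj_on (rainbow_code G c k) (verts G)"

definition rvcl :: "'a graph \<Rightarrow> nat" where
  "rvcl G = (LEAST k. \<exists>c. locating_rainbow_coloring G k c)"

definition complete_graph :: "'b set \<Rightarrow> 'b graph" where
  "complete_graph V = (V, {{u, v} | u v. u \<in> V \<and> v \<in> V \<and> u \<noteq> v})"

text \<open>Edge corona: vertices Inl v (v in G) and Inr (e, h) (h in the copy of H attached to edge e).\<close>
definition edge_corona :: "'a graph \<Rightarrow> 'b graph \<Rightarrow> ('a + ('a set \<times> 'b)) graph" where
  "edge_corona G H =
    (Inl ` verts G \<union> Inr ` (edges G \<times> verts H),
     (\<lambda>e. Inl ` e) ` edges G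
     \<union> {{Inr (e, h), Inr (e, h')} | e h h'. e \<in> edges G \<and> {h, h'} \<in> edges H}
     \<union> {{Inl u, Inr (e, h)} | u e h. e \<in> edges G \<and> u \<in> e \<and> h \<in> verts H})"

end

theory Submission
  imports Defs
begin

lemma walk_single[simp]: "is_walk G [x] \<longleftrightarrow> x \<in> verts G"
  by (simp add: is_walk_def)

lemma walk_nil[simp]: "\<not> is_walk G []"
  by (simp add: is_walk_def)

lemma walk_cons2[simp]: "is_walk G (x # y # xs) \<longleftrightarrow> x \<in> verts G \<and> {x,y} \<in> edges G \<and> is_walk G (y # xs)"
proof
  assume a: "is_walk G (x # y # xs)"
  have "{(x#y#xs) ! 0, (x#y#xs) ! (0+1)} \<in> edges G" using a unfolding is_walk_def by force
  moreover have "is_walk G (y # xs)" unfolding is_walk_def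
  proof (intro conjI allI impI)
    fix i assume "i < length (y # xs) - 1"
    then have "Suc i < length (x#y#xs) - 1" by simp
    then have "{(x#y#xs) ! Suc i, (x#y#xs) ! (Suc i+1)} \<in> edges G" using a unfolding is_walk_def by blast
    then show "{(y # xs) ! i, (y # xs) ! (i + 1)} \<in> edges G" by simp
  qed (use a in \<open>auto simp: is_walk_def\<close>)
  ultimately show "x \<in> verts G \<and> {x,y} \<in> edges G \<and> is_walk G (y # xs)" using a by (auto simp: is_walk_def)
next
  assume a: "x \<in> verts G \<and> {x,y} \<in> edges G \<and> is_walk G (y # xs)"
  show "is_walk G (x # y # xs)" unfolding is_walk_def
  proof (intro conjI allI impI)
    fix i assume i: "i < length (x # y # xs) - 1"
    show "{(x # y # xs) ! i, (x # y # xs) ! (i + 1)} \<in> edges G"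
    proof (cases i)
      case 0 then show ?thesis using a by simp
    next
      case (Suc j)
      then have "j < length (y # xs) - 1" using i by simp
      then have "{(y#xs) ! j, (y#xs) ! (j+1)} \<in> edges G" using a unfolding is_walk_def by blast
      then show ?thesis using Suc by simp
    qed
  qed (use a in \<open>auto simp: is_walk_def\<close>)
qed

lemma walk_map:
  assumes "\<And>a. a \<in> verts G \<Longrightarrow> f a \<in> verts H"
    and "\<And>a b. {a,b} \<in> edges G \<Longrightarrow> {f a, f b} \<in> edges H"
  shows "is_walk G xs \<Longrightarrow> is_walk H (map f xs)"
  by (induction xs rule: induct_list012) (auto simp: assms)

lemma walk_snoc:
  "is_walk G xs \<Longrightarrow> z \<in> verts G \<Longrightarrow> {last xs, z} \<in> edges G \<Longrightarrow> is_walk G (xs @ [z])"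
proof (induction xs rule: induct_list012)
  case (3 x y zs)
  have "is_walk G ((y # zs) @ [z])" using 3 by (intro "3.IH"(2)) simp_all
  then show ?case using 3(3) by (simp only: append_Cons walk_cons2)
qed simp_all

lemma walk_cons:
  "is_walk G xs \<Longrightarrow> z \<in> verts G \<Longrightarrow> {z, hd xs} \<in> edges G \<Longrightarrow> is_walk G (z # xs)"
proof (cases xs)
  case (Cons a l)
  assume "is_walk G xs" "z \<in> verts G" "{z, hd xs} \<in> edges G"
  then show ?thesis using Cons by (simp only: walk_cons2 list.sel)
qed simp

lemma walk_verts: "is_walk G xs \<Longrightarrow> set xs \<subseteq> verts G"
  by (simp add: is_walk_def)

lemma gdist_refl: "a \<in> verts G \<Longrightarrow> gdist G a a = 0"
  unfolding gdist_def by (rule Least_eq_0) (rule exI[of _ "[a]"], simp)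

lemma gdist_edge: "{a,b} \<in> edges G \<Longrightarrow> a \<in> verts G \<Longrightarrow> b \<in> verts G \<Longrightarrow> gdist G a b \<le> 1"
  unfolding gdist_def by (rule Least_le) (rule exI[of _ "[a,b]"], simp)

lemma gdist_zero:
  assumes "gdist G a b = 0" "is_walk G xs" "hd xs = a" "last xs = b"
  shows "a = b"
proof -
  have ne: "xs \<noteq> []" using assms(2) by (simp add: is_walk_def)
  have "length xs = (length xs - 1) + 1" using ne by simp
  then have "\<exists>ys. is_walk G ys \<and> hd ys = a \<and> last ys = b \<and> length ys = (length xs - 1) + 1"
    using assms(2-4) by blast
  then have "\<exists>ys. is_walk G ys \<and> hd ys = a \<and> last ys = b \<and> length ys = gdist G a b + 1"
    unfolding gdist_def by (rule LeastI)
  then obtain ys where ys: "hd ys = a" "last ys = b" "length ys = 1" using assms(1) by auto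
  then obtain y where "ys = [y]" by (metis One_nat_def length_0_conv length_Suc_conv)
  then show ?thesis using ys by simp
qed

lemma sd_mem: "v \<in> S \<Longrightarrow> v \<in> verts G \<Longrightarrow> set_dist G v S = 0"
proof -
  assume a: "v \<in> S" "v \<in> verts G"
  have "gdist G v v = 0" using a(2) by (rule gdist_refl)
  then show ?thesis unfolding set_dist_def using a(1) by (intro Least_eq_0) blast
qed

lemma sd_le: "z \<in> S \<Longrightarrow> set_dist G v S \<le> gdist G v z"
  unfolding set_dist_def by (rule Least_le) (rule bexI[of _ z], rule refl)

lemma sd_zero: "set_dist G v S = 0 \<Longrightarrow> z \<in> S \<Longrightarrow> \<exists>w\<in>S. gdist G v w = 0"
proof -
  assume a: "set_dist G v S = 0" "z \<in> S"
  have "\<exists>x\<in>S. gdist G v x = (LEAST n. \<exists>x\<in>S. gdist G v x = n)"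
    by (rule LeastI[of _ "gdist G v z"]) (use a in blast)
  then show ?thesis using a(1) unfolding set_dist_def by simp
qed

lemma gdist_auto:
  assumes inv: "\<And>z. \<sigma> (\<sigma> z) = z" and wk: "\<And>xs. is_walk G xs \<Longrightarrow> is_walk G (map \<sigma> xs)"
  shows "gdist G (\<sigma> a) (\<sigma> b) = gdist G a b"
proof -
  have "(\<exists>xs. is_walk G xs \<and> hd xs = \<sigma> a \<and> last xs = \<sigma> b \<and> length xs = n + 1) \<longleftrightarrow>
        (\<exists>xs. is_walk G xs \<and> hd xs = a \<and> last xs = b \<and> length xs = n + 1)" for n
  proof
    assume "\<exists>xs. is_walk G xs \<and> hd xs = \<sigma> a \<and> last xs = \<sigma> b \<and> length xs = n + 1"
    then obtain xs where xs: "is_walk G xs" "hd xs = \<sigma> a" "last xs = \<sigma> b" "length xs = n + 1" by blast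
    then have "xs \<noteq> []" by auto
    then show "\<exists>xs. is_walk G xs \<and> hd xs = a \<and> last xs = b \<and> length xs = n + 1"
      using xs wk[OF xs(1)] inv by (intro exI[of _ "map \<sigma> xs"]) (simp add: hd_map last_map)
  next
    assume "\<exists>xs. is_walk G xs \<and> hd xs = a \<and> last xs = b \<and> length xs = n + 1"
    then obtain xs where xs: "is_walk G xs" "hd xs = a" "last xs = b" "length xs = n + 1" by blast
    then have "xs \<noteq> []" by auto
    then show "\<exists>xs. is_walk G xs \<and> hd xs = \<sigma> a \<and> last xs = \<sigma> b \<and> length xs = n + 1"
      using xs wk[OF xs(1)] by (intro exI[of _ "map \<sigma> xs"]) (simp add: hd_map last_map)
  qed
  then show ?thesis unfolding gdist_def by simp
qed

lemma sd_auto: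
  assumes inv: "\<And>z. \<sigma> (\<sigma> z) = z" and wk: "\<And>xs. is_walk G xs \<Longrightarrow> is_walk G (map \<sigma> xs)"
  shows "set_dist G (\<sigma> v) (\<sigma> ` S) = set_dist G v S"
proof -
  have "(\<exists>x\<in>\<sigma> ` S. gdist G (\<sigma> v) x = n) \<longleftrightarrow> (\<exists>x\<in>S. gdist G v x = n)" for n
    using gdist_auto[OF assms] by auto
  then show ?thesis unfolding set_dist_def by simp
qed

lemma code_auto:
  assumes inv: "\<And>z. \<sigma> (\<sigma> z) = z" and wk: "\<And>xs. is_walk G xs \<Longrightarrow> is_walk G (map \<sigma> xs)"
    and vs: "\<And>z. z \<in> verts G \<Longrightarrow> \<sigma> z \<in> verts G"
    and cs: "\<And>z. z \<in> verts G \<Longrightarrow> c (\<sigma> z) = c z"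
  shows "rainbow_code G c k (\<sigma> v) = rainbow_code G c k v"
proof -
  have "\<sigma> ` color_class G c i = color_class G c i" for i
  proof
    show "\<sigma> ` color_class G c i \<subseteq> color_class G c i"
      using vs cs by (auto simp: color_class_def)
    show "color_class G c i \<subseteq> \<sigma> ` color_class G c i"
    proof
      fix z assume z: "z \<in> color_class G c i"
      then have "\<sigma> z \<in> color_class G c i" using vs cs by (auto simp: color_class_def)
      then show "z \<in> \<sigma> ` color_class G c i" using inv[of z] by (metis image_eqI)
    qed
  qed
  then have "set_dist G (\<sigma> v) (color_class G c i) = set_dist G v (color_class G c i)" for i
    using sd_auto[OF inv wk, of v "color_class G c i"] by simp
  then show ?thesis unfolding rainbow_code_def by simp
qed

lemma verts_corona: "verts (edge_corona G H) = Inl ` verts G \<union> Inr ` (edges G \<times> verts H)"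
  by (simp add: edge_corona_def verts_def)

lemma edges_corona: "edges (edge_corona G H) =
     (\<lambda>e. Inl ` e) ` edges G
     \<union> {{Inr (e, h), Inr (e, h')} | e h h'. e \<in> edges G \<and> {h, h'} \<in> edges H}
     \<union> {{Inl u, Inr (e, h)} | u e h. e \<in> edges G \<and> u \<in> e \<and> h \<in> verts H}"
  by (simp add: edge_corona_def edges_def)

lemma verts_complete[simp]: "verts (complete_graph V) = V"
  by (simp add: complete_graph_def verts_def)

lemma edges_complete_iff: "{a,b} \<in> edges (complete_graph V) \<longleftrightarrow> a \<in> V \<and> b \<in> V \<and> a \<noteq> b"
proof
  assume "{a,b} \<in> edges (complete_graph V)"
  then obtain u v where "{a,b} = {u,v}" "u \<in> V" "v \<in> V" "u \<noteq> v"
    by (auto simp: complete_graph_def edges_def)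
  then show "a \<in> V \<and> b \<in> V \<and> a \<noteq> b" by (auto simp: doubleton_eq_iff)
next
  assume "a \<in> V \<and> b \<in> V \<and> a \<noteq> b"
  then show "{a,b} \<in> edges (complete_graph V)"
    by (auto simp: complete_graph_def edges_def)
qed

definition sw :: "'a set \<Rightarrow> 'b \<Rightarrow> 'b \<Rightarrow> 'a set \<Rightarrow> 'b \<Rightarrow> 'b" where
  "sw e h h' e1 h1 = (if e1 = e then (if h1 = h then h' else if h1 = h' then h else h1) else h1)"

definition tw :: "'a set \<Rightarrow> 'b \<Rightarrow> 'b \<Rightarrow> ('a + ('a set \<times> 'b)) \<Rightarrow> ('a + ('a set \<times> 'b))" where
  "tw e h h' z = (case z of Inl u \<Rightarrow> Inl u | Inr p \<Rightarrow> Inr (fst p, sw e h h' (fst p) (snd p)))"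

lemma tw_Inl[simp]: "tw e h h' (Inl u) = Inl u" by (simp add: tw_def)
lemma tw_Inr[simp]: "tw e h h' (Inr (e1, h1)) = Inr (e1, sw e h h' e1 h1)" by (simp add: tw_def)

lemma sw_inv[simp]: "sw e h h' e1 (sw e h h' e1 h1) = h1" by (simp add: sw_def)
lemma sw_V: "h \<in> V \<Longrightarrow> h' \<in> V \<Longrightarrow> h1 \<in> V \<Longrightarrow> sw e h h' e1 h1 \<in> V" by (simp add: sw_def)

lemma tw_inv: "tw e h h' (tw e h h' z) = z"
  by (cases z) auto

lemma tw_verts:
  assumes "h \<in> V" "h' \<in> V" "z \<in> verts (edge_corona G (complete_graph V))"
  shows "tw e h h' z \<in> verts (edge_corona G (complete_graph V))"
proof -
  consider (a) u where "z = Inl u" "u \<in> verts G" | (b) e1 h1 where "z = Inr (e1, h1)" "e1 \<in> edges G" "h1 \<in> V"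
    using assms(3) unfolding verts_corona by auto
  then show ?thesis
  proof cases
    case a then show ?thesis using assms(3) by simp
  next
    case b
    have "sw e h h' e1 h1 \<in> V" using sw_V[OF assms(1,2) b(3)] .
    then show ?thesis using b unfolding verts_corona by auto
  qed
qed

lemma tw_edge:
  assumes hV: "h \<in> V" "h' \<in> V" and X: "X \<in> edges (edge_corona G (complete_graph V))"
  shows "tw e h h' ` X \<in> edges (edge_corona G (complete_graph V))"
proof -
  let ?s = "sw e h h'"
  consider (a) e1 where "X = Inl ` e1" "e1 \<in> edges G"
    | (b) e1 h1 h2 where "X = {Inr (e1, h1), Inr (e1, h2)}" "e1 \<in> edges G" "{h1, h2} \<in> edges (complete_graph V)"
    | (c) u e1 h1 where "X = {Inl u, Inr (e1, h1)}" "e1 \<in> edges G" "u \<in> e1" "h1 \<in> V"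
    using X unfolding edges_corona by auto
  then show ?thesis
  proof cases
    case a
    have "tw e h h' ` X = Inl ` e1" unfolding a(1) image_image by simp
    then show ?thesis using a(2) unfolding edges_corona by blast
  next
    case b
    have h12: "h1 \<in> V" "h2 \<in> V" "h1 \<noteq> h2" using b(3) edges_complete_iff by metis+
    have "?s e1 h1 \<noteq> ?s e1 h2" using h12(3) sw_inv by metis
    then have "{?s e1 h1, ?s e1 h2} \<in> edges (complete_graph V)"
      using edges_complete_iff sw_V[OF hV] h12 by metis
    moreover have "tw e h h' ` X = {Inr (e1, ?s e1 h1), Inr (e1, ?s e1 h2)}" unfolding b(1) by simp
    ultimately show ?thesis using b(2) unfolding edges_corona by blast
  next
    case c
    have "tw e h h' ` X = {Inl u, Inr (e1, ?s e1 h1)}" unfolding c(1) by simp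
    moreover have "?s e1 h1 \<in> verts (complete_graph V)" using sw_V[OF hV c(4)] by simp
    ultimately show ?thesis using c(2,3) unfolding edges_corona by blast
  qed
qed

lemma tw_walk:
  assumes "h \<in> V" "h' \<in> V" "is_walk (edge_corona G (complete_graph V)) xs"
  shows "is_walk (edge_corona G (complete_graph V)) (map (tw e h h') xs)"
proof (rule walk_map[OF _ _ assms(3)])
  fix a b assume "{a, b} \<in> edges (edge_corona G (complete_graph V))"
  from tw_edge[OF assms(1,2) this, of e] show "{tw e h h' a, tw e h h' b} \<in> edges (edge_corona G (complete_graph V))"
    by simp
qed (rule tw_verts[OF assms(1,2)])

lemma simple_edge_verts: "simple_graph G \<Longrightarrow> e \<in> edges G \<Longrightarrow> \<exists>u v. e = {u,v} \<and> u \<in> verts G \<and> v \<in> verts G \<and> u \<noteq> v"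
  unfolding simple_graph_def by blast

lemma lift_path:
  assumes "is_path G p"
  shows "is_path (edge_corona G H) (map Inl p)"
proof -
  have "is_walk (edge_corona G H) (map Inl p)"
  proof (rule walk_map[where G=G])
    fix a b assume "{a,b} \<in> edges G"
    then have "Inl ` {a,b} \<in> edges (edge_corona G H)" unfolding edges_corona by blast
    then show "{Inl a, Inl b} \<in> edges (edge_corona G H)" by simp
  qed (use assms in \<open>auto simp: verts_corona is_path_def\<close>)
  moreover have "distinct (map Inl p)" using assms by (simp add: is_path_def distinct_map)
  ultimately show ?thesis by (simp add: is_path_def)
qed

lemma corona_conn:
  assumes cG: "connected_graph G"
    and a: "a \<in> verts (edge_corona G (complete_graph V))" and b: "b \<in> verts (edge_corona G (complete_graph V))"
  shows "\<exists>xs. is_path (edge_corona G (complete_graph V)) xs \<and> hd xs = a \<and> last xs = b"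
proof -
  let ?C = "edge_corona G (complete_graph V)"
  have sG: "simple_graph G" using cG by (simp add: connected_graph_def)
  have GP: "\<exists>p. is_path G p \<and> hd p = u \<and> last p = w" if "u \<in> verts G" "w \<in> verts G" for u w
    using cG that by (simp add: connected_graph_def)
  have EW: "\<exists>w. w \<in> e \<and> w \<in> verts G" if "e \<in> edges G" for e
    using simple_edge_verts[OF sG that] by blast
  have att: "{Inl w, Inr (e, h)} \<in> edges ?C" if "e \<in> edges G" "w \<in> e" "h \<in> V" for w e h
    using that unfolding edges_corona by auto
  have pne: "p \<noteq> []" if "is_path G p" for p using that by (auto simp: is_path_def is_walk_def)
  show ?thesis
  proof (cases "a = b")
    case True
    then show ?thesis using a by (intro exI[of _ "[a]"]) (simp add: is_path_def)
  next
    case False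
    consider (ll) u v where "a = Inl u" "b = Inl v" "u \<in> verts G" "v \<in> verts G"
      | (lr) u e h where "a = Inl u" "b = Inr (e, h)" "u \<in> verts G" "e \<in> edges G" "h \<in> V"
      | (rl) u e h where "b = Inl u" "a = Inr (e, h)" "u \<in> verts G" "e \<in> edges G" "h \<in> V"
      | (rr) e h e' h' where "a = Inr (e, h)" "b = Inr (e', h')" "e \<in> edges G" "h \<in> V" "e' \<in> edges G" "h' \<in> V"
      using a b unfolding verts_corona by auto
    then show ?thesis
    proof cases
      case ll
      obtain p where p: "is_path G p" "hd p = u" "last p = v" using GP[OF ll(3,4)] by blast
      show ?thesis using lift_path[OF p(1)] p pne[OF p(1)] ll
        by (intro exI[of _ "map Inl p"]) (simp add: hd_map last_map)
    next
      case lr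
      obtain w where w: "w \<in> e" "w \<in> verts G" using EW[OF lr(4)] by blast
      obtain p where p: "is_path G p" "hd p = u" "last p = w" using GP[OF lr(3) w(2)] by blast
      have ne: "p \<noteq> []" using pne[OF p(1)] .
      have lp: "is_path ?C (map Inl p)" using lift_path[OF p(1)] .
      have "is_walk ?C (map Inl p @ [Inr (e, h)])"
      proof (rule walk_snoc)
        show "is_walk ?C (map Inl p)" using lp by (simp add: is_path_def)
        show "Inr (e, h) \<in> verts ?C" using lr unfolding verts_corona by auto
        show "{last (map Inl p), Inr (e, h)} \<in> edges ?C" using ne p(3) att[OF lr(4) w(1) lr(5)] by (simp add: last_map)
      qed
      moreover have "distinct (map Inl p @ [Inr (e, h)])" using lp by (auto simp: is_path_def)
      ultimately show ?thesis using ne p lr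
        by (intro exI[of _ "map Inl p @ [Inr (e, h)]"]) (simp add: is_path_def hd_map)
    next
      case rl
      obtain w where w: "w \<in> e" "w \<in> verts G" using EW[OF rl(4)] by blast
      obtain p where p: "is_path G p" "hd p = w" "last p = u" using GP[OF w(2) rl(3)] by blast
      have ne: "p \<noteq> []" using pne[OF p(1)] .
      have lp: "is_path ?C (map Inl p)" using lift_path[OF p(1)] .
      have "is_walk ?C (Inr (e, h) # map Inl p)"
      proof (rule walk_cons)
        show "is_walk ?C (map Inl p)" using lp by (simp add: is_path_def)
        show "Inr (e, h) \<in> verts ?C" using rl unfolding verts_corona by auto
        show "{Inr (e, h), hd (map Inl p)} \<in> edges ?C" using ne p(2) att[OF rl(4) w(1) rl(5)]
          by (simp add: hd_map insert_commute)
      qed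
      moreover have "distinct (Inr (e, h) # map Inl p)" using lp by (auto simp: is_path_def)
      ultimately show ?thesis using ne p rl
        by (intro exI[of _ "Inr (e, h) # map Inl p"]) (simp add: is_path_def last_map)
    next
      case rr
      obtain w where w: "w \<in> e" "w \<in> verts G" using EW[OF rr(3)] by blast
      obtain w' where w': "w' \<in> e'" "w' \<in> verts G" using EW[OF rr(5)] by blast
      obtain p where p: "is_path G p" "hd p = w" "last p = w'" using GP[OF w(2) w'(2)] by blast
      have ne: "p \<noteq> []" using pne[OF p(1)] .
      have lp: "is_path ?C (map Inl p)" using lift_path[OF p(1)] .
      have w1: "is_walk ?C (map Inl p @ [Inr (e', h')])"
      proof (rule walk_snoc)
        show "is_walk ?C (map Inl p)" using lp by (simp add: is_path_def)
        show "Inr (e', h') \<in> verts ?C" using rr unfolding verts_corona by auto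
        show "{last (map Inl p), Inr (e', h')} \<in> edges ?C" using ne p(3) att[OF rr(5) w'(1) rr(6)] by (simp add: last_map)
      qed
      have "is_walk ?C (Inr (e, h) # (map Inl p @ [Inr (e', h')]))"
      proof (rule walk_cons[OF w1])
        show "Inr (e, h) \<in> verts ?C" using rr unfolding verts_corona by auto
        show "{Inr (e, h), hd (map Inl p @ [Inr (e', h')])} \<in> edges ?C" using ne p(2) att[OF rr(3) w(1) rr(4)]
          by (simp add: hd_map insert_commute)
      qed
      moreover have "distinct (Inr (e, h) # (map Inl p @ [Inr (e', h')]))" using lp False rr by (auto simp: is_path_def)
      ultimately show ?thesis using ne p rr
        by (intro exI[of _ "Inr (e, h) # (map Inl p @ [Inr (e', h')])"]) (simp add: is_path_def)
    qed
  qed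
qed

lemma gdist_zero_conn:
  assumes "\<exists>xs. is_path G xs \<and> hd xs = a \<and> last xs = b" "gdist G a b = 0"
  shows "a = b"
  using assms gdist_zero unfolding is_path_def by metis

lemma sd_one:
  assumes conn: "\<And>a b. a \<in> verts G \<Longrightarrow> b \<in> verts G \<Longrightarrow> \<exists>xs. is_path G xs \<and> hd xs = a \<and> last xs = b"
    and a: "a \<in> verts G" and z: "z \<in> color_class G c i" and e: "{a, z} \<in> edges G" and ca: "c a \<noteq> i"
  shows "set_dist G a (color_class G c i) = 1"
proof -
  have zv: "z \<in> verts G" using z by (simp add: color_class_def)
  have "set_dist G a (color_class G c i) \<le> 1"
    using sd_le[OF z, of G a] gdist_edge[OF e a zv] by linarith
  moreover have "set_dist G a (color_class G c i) \<noteq> 0"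
  proof
    assume "set_dist G a (color_class G c i) = 0"
    then obtain w where w: "w \<in> color_class G c i" "gdist G a w = 0" using sd_zero[OF _ z] by blast
    have "w \<in> verts G" using w(1) by (simp add: color_class_def)
    then have "a = w" using gdist_zero_conn[OF conn[OF a] w(2)] by blast
    then show False using w(1) ca by (simp add: color_class_def)
  qed
  ultimately show ?thesis by linarith
qed

lemma key:
  fixes G :: "'a graph" and V :: "'b set"
  assumes e0: "e0 \<in> edges G" and w0: "w0 \<in> e0" "w0 \<in> verts G"
    and fV: "finite V" and cV: "card V = n" and n2: "n \<ge> 2"
    and cG: "connected_graph G"
    and loc: "locating_rainbow_coloring (edge_corona G (complete_graph V)) k c"
  shows "n + 1 \<le> k"
proof -
  let ?C = "edge_corona G (complete_graph V)"
  let ?W = "verts ?C"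
  have conn: "\<And>a b. a \<in> ?W \<Longrightarrow> b \<in> ?W \<Longrightarrow> \<exists>xs. is_path ?C xs \<and> hd xs = a \<and> last xs = b"
    using corona_conn[OF cG] by blast
  have img: "c ` ?W = {1..k}" and inj: "inj_on (rainbow_code ?C c k) ?W"
    using loc by (simp_all add: locating_rainbow_coloring_def)
  have inW: "Inr (e0, h) \<in> ?W" if "h \<in> V" for h using that e0 unfolding verts_corona by auto
  have twins: "h = h'" if h: "h \<in> V" "h' \<in> V" and ceq: "c (Inr (e0, h)) = c (Inr (e0, h'))" for h h'
  proof -
    let ?s = "tw e0 h h'"
    have cs: "c (?s z) = c z" if "z \<in> ?W" for z
    proof (cases z)
      case (Inr p)
      then obtain e1 h1 where "z = Inr (e1, h1)" by (cases p) auto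
      then show ?thesis using ceq by (auto simp: sw_def)
    qed simp
    have "rainbow_code ?C c k (?s (Inr (e0, h))) = rainbow_code ?C c k (Inr (e0, h))"
    proof (rule code_auto)
      show "\<And>z. ?s (?s z) = z" by (rule tw_inv)
      show "\<And>xs. is_walk ?C xs \<Longrightarrow> is_walk ?C (map ?s xs)" by (rule tw_walk[OF h])
      show "\<And>z. z \<in> ?W \<Longrightarrow> ?s z \<in> ?W" by (rule tw_verts[OF h])
      show "\<And>z. z \<in> ?W \<Longrightarrow> c (?s z) = c z" by (rule cs)
    qed
    moreover have "?s (Inr (e0, h)) = Inr (e0, h')" by (simp add: sw_def)
    ultimately have "Inr (e0, h') = (Inr (e0, h) :: 'a + ('a set \<times> 'b))"
      using inj inW[OF h(1)] inW[OF h(2)] by (metis inj_onD)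
    then show ?thesis by simp
  qed
  let ?f = "\<lambda>h. c (Inr (e0, h))"
  have injf: "inj_on ?f V" using twins by (meson inj_onI)
  have sub: "?f ` V \<subseteq> {1..k}" using img inW by blast
  have cardf: "card (?f ` V) = n" using card_image[OF injf] cV by simp
  have nk: "n \<le> k" using card_mono[OF _ sub] cardf by simp
  show ?thesis
  proof (rule ccontr)
    assume "\<not> n + 1 \<le> k"
    then have kn: "k = n" using nk by simp
    have fV_eq: "?f ` V = {1..k}" using card_subset_eq[OF _ sub] cardf kn by simp
    let ?u = "Inl w0 :: 'a + ('a set \<times> 'b)"
    have uW: "?u \<in> ?W" using w0 unfolding verts_corona by auto
    have "c ?u \<in> {1..k}" using img uW by blast
    then have "c ?u \<in> ?f ` V" using fV_eq by simp
    then obtain h0 where h0: "h0 \<in> V" "c (Inr (e0, h0)) = c ?u" by (auto simp del: fV_eq)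
    let ?x = "Inr (e0, h0) :: 'a + ('a set \<times> 'b)"
    have xW: "?x \<in> ?W" using inW[OF h0(1)] .
    have eq: "set_dist ?C ?u (color_class ?C c i) = set_dist ?C ?x (color_class ?C c i)"
      if i: "i \<in> {1..k}" for i
    proof (cases "i = c ?u")
      case True
      have "?u \<in> color_class ?C c i" "?x \<in> color_class ?C c i"
        using True uW xW h0(2) by (simp_all add: color_class_def)
      then show ?thesis using sd_mem[OF _ uW] sd_mem[OF _ xW] by simp
    next
      case False
      have "i \<in> ?f ` V" using i fV_eq by simp
      then obtain h2 where h2: "h2 \<in> V" "c (Inr (e0, h2)) = i" by (auto simp del: fV_eq)
      let ?z = "Inr (e0, h2) :: 'a + ('a set \<times> 'b)"
      have zc: "?z \<in> color_class ?C c i" using inW[OF h2(1)] h2 by (simp add: color_class_def)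
      have "h0 \<noteq> h2" using h0 h2 False by auto
      then have "{h0, h2} \<in> edges (complete_graph V)" using edges_complete_iff h0(1) h2(1) by metis
      then have "{?x, ?z} \<in> {{Inr (e, h), Inr (e, h')} | e h h'. e \<in> edges G \<and> {h, h'} \<in> edges (complete_graph V)}"
        using e0 by blast
      then have ex: "{?x, ?z} \<in> edges ?C" unfolding edges_corona by (intro UnI1 UnI2)
      have "{?u, ?z} \<in> {{Inl u, Inr (e, h)} | u e h. e \<in> edges G \<and> u \<in> e \<and> h \<in> verts (complete_graph V)}"
        using e0 w0 h2(1) by auto
      then have eu: "{?u, ?z} \<in> edges ?C" unfolding edges_corona by (intro UnI2)
      have "set_dist ?C ?u (color_class ?C c i) = 1" using sd_one[OF conn uW zc eu] False by blast
      moreover have "set_dist ?C ?x (color_class ?C c i) = 1" using sd_one[OF conn xW zc ex] False h0(2) by simp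
      ultimately show ?thesis by simp
    qed
    have "rainbow_code ?C c k ?u = rainbow_code ?C c k ?x"
      unfolding rainbow_code_def map_eq_conv
    proof
      fix i assume "i \<in> set [1..<k + 1]"
      then have "i \<in> {1..k}" by auto
      then show "set_dist ?C ?u (color_class ?C c i) = set_dist ?C ?x (color_class ?C c i)" by (rule eq)
    qed
    then have "?u = ?x" using inj_onD[OF inj _ uW xW] by blast
    then show False by simp
  qed
qed

lemma exist_loc:
  assumes cG: "connected_graph G" and fV: "finite V"
  shows "\<exists>k c. locating_rainbow_coloring (edge_corona G (complete_graph V)) k c"
proof -
  let ?C = "edge_corona G (complete_graph V)"
  let ?W = "verts ?C"
  have sG: "simple_graph G" using cG by (simp add: connected_graph_def)
  have fG: "finite (verts G)" using sG by (simp add: simple_graph_def)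
  have "edges G \<subseteq> Pow (verts G)" using sG unfolding simple_graph_def by blast
  moreover have "finite (Pow (verts G))" using fG by simp
  ultimately have fE: "finite (edges G)" by (rule finite_subset)
  have fW: "finite ?W" unfolding verts_corona using fG fE fV by (simp only: finite_Un finite_imageI finite_cartesian_product verts_complete)
  have conn: "\<And>a b. a \<in> ?W \<Longrightarrow> b \<in> ?W \<Longrightarrow> \<exists>xs. is_path ?C xs \<and> hd xs = a \<and> last xs = b"
    using corona_conn[OF cG] by blast
  obtain f where f: "bij_betw f ?W {0..<card ?W}" using ex_bij_betw_finite_nat[OF fW] by blast
  define c where "c = (\<lambda>z. Suc (f z))"
  define N where "N = card ?W"
  have img: "c ` ?W = {1..N}"
  proof -
    have "c ` ?W = Suc ` (f ` ?W)" unfolding c_def by (simp add: image_image)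
    also have "\<dots> = Suc ` {0..<N}" using f unfolding N_def bij_betw_def by simp
    also have "\<dots> = {1..N}" by (simp add: atLeastLessThanSuc_atLeastAtMost)
    finally show ?thesis .
  qed
  have injc: "inj_on c ?W" using f unfolding c_def bij_betw_def inj_on_def by simp
  have rb: "rainbow_vertex_coloring ?C N c"
    unfolding rainbow_vertex_coloring_def
  proof (intro conjI ballI)
    show "c ` ?W \<subseteq> {1..N}" using img by simp
  next
    fix u v assume "u \<in> ?W" "v \<in> ?W"
    then obtain xs where xs: "is_path ?C xs" "hd xs = u" "last xs = v" using conn by blast
    have "distinct xs" using xs(1) by (simp add: is_path_def)
    then have "distinct (tl xs)" by (cases xs) auto
    then have d: "distinct (butlast (tl xs))" by (rule distinct_butlast)
    have "set (tl xs) \<subseteq> set xs" by (cases xs) auto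
    then have "set (butlast (tl xs)) \<subseteq> set xs" using in_set_butlastD by fastforce
    moreover have "set xs \<subseteq> ?W" using xs(1) by (simp add: is_path_def is_walk_def)
    ultimately have "inj_on c (set (butlast (tl xs)))" using injc inj_on_subset by blast
    then have "distinct (map c (butlast (tl xs)))" using d by (simp add: distinct_map)
    then show "\<exists>xs. is_path ?C xs \<and> hd xs = u \<and> last xs = v \<and> distinct (map c (butlast (tl xs)))"
      using xs by blast
  qed
  have injcode: "inj_on (rainbow_code ?C c N) ?W"
  proof (rule inj_onI)
    fix v w assume v: "v \<in> ?W" and w: "w \<in> ?W" and eq: "rainbow_code ?C c N v = rainbow_code ?C c N w"
    have "c v \<in> {1..N}" using img v by blast
    then have "c v \<in> set [1..<N + 1]" by auto
    then have e: "set_dist ?C v (color_class ?C c (c v)) = set_dist ?C w (color_class ?C c (c v))"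
      using eq unfolding rainbow_code_def map_eq_conv by blast
    have vc: "v \<in> color_class ?C c (c v)" using v by (simp add: color_class_def)
    have "set_dist ?C w (color_class ?C c (c v)) = 0" using e sd_mem[OF vc v] by simp
    then obtain w' where w': "w' \<in> color_class ?C c (c v)" "gdist ?C w w' = 0" using sd_zero[OF _ vc] by blast
    have w'W: "w' \<in> ?W" "c w' = c v" using w'(1) by (simp_all add: color_class_def)
    have "w = w'" using gdist_zero_conn[OF conn[OF w w'W(1)] w'(2)] .
    then show "v = w" using inj_onD[OF injc w'W(2) w'W(1) v] by simp
  qed
  have "locating_rainbow_coloring ?C N c" unfolding locating_rainbow_coloring_def using rb img injcode by (intro conjI)
  then show ?thesis by (intro exI)
qed

theorem lemma4:
  fixes G :: "'a graph" and V :: "'b set" and m n :: nat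
  assumes "m \<ge> 2" and "n \<ge> 2"
    and "connected_graph G" and "card (verts G) = m"
    and "finite V" and "card V = n"
  shows "rvcl (edge_corona G (complete_graph V)) \<ge> n + 1"
proof -
  have sG: "simple_graph G" using assms(3) by (simp add: connected_graph_def)
  have fG: "finite (verts G)" using sG by (simp add: simple_graph_def)
  have "card (verts G) \<ge> 2" using assms(1,4) by simp
  then have "\<not> card (verts G) \<le> Suc 0" by simp
  then have "\<not> (\<forall>a1 \<in> verts G. \<forall>a2 \<in> verts G. a1 = a2)" using card_le_Suc0_iff_eq[OF fG] by simp
  then obtain u v where uv: "u \<in> verts G" "v \<in> verts G" "u \<noteq> v" by blast
  obtain p where p: "is_path G p" "hd p = u" "last p = v" using assms(3) uv by (auto simp: connected_graph_def)
  have "length p \<ge> 2"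
  proof (rule ccontr)
    assume "\<not> length p \<ge> 2"
    then have "length p \<le> 1" by simp
    moreover have "p \<noteq> []" using p(1) by (simp add: is_path_def is_walk_def)
    ultimately have "hd p = last p" by (cases p) auto
    then show False using p uv by simp
  qed
  then have l: "0 < length p - 1" "0 < length p" by arith+
  have wp: "is_walk G p" using p(1) by (simp add: is_path_def)
  then have "{p ! 0, p ! (0 + 1)} \<in> edges G" using l(1) unfolding is_walk_def by blast
  moreover have "p ! 0 \<in> set p" using l(2) by (rule nth_mem)
  then have "p ! 0 \<in> verts G" using wp unfolding is_walk_def by blast
  ultimately obtain e0 w0 where e0: "e0 \<in> edges G" "w0 \<in> e0" "w0 \<in> verts G" by blast
  have ex: "\<exists>k. \<exists>c. locating_rainbow_coloring (edge_corona G (complete_graph V)) k c"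
    using exist_loc[OF assms(3,5)] by blast
  have "\<exists>c. locating_rainbow_coloring (edge_corona G (complete_graph V)) (rvcl (edge_corona G (complete_graph V))) c"
    unfolding rvcl_def by (rule LeastI_ex[OF ex])
  then obtain c where "locating_rainbow_coloring (edge_corona G (complete_graph V)) (rvcl (edge_corona G (complete_graph V))) c" by blast
  from key[OF e0 assms(5,6,2,3) this] show ?thesis .
qed

end
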